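(* Consider Variant 1 of the generalized one-way trading problem under Assumption A, with $0<L<U$. Let $\alpha>1$ be the solution of $\alpha=\ln\frac{U-L}{\alpha L-L}$ and define $\phi^*(w)=L+(U-L)e^{\frac{\alpha}{C}w-\alpha}$ for $w\in[0,C]$ and $\phi^*(w)=+\infty$ for $w>C$. Then the competitive ratio of $\mathsf{OTA}_{\phi^*}$ for Variant 1 is $\alpha$.
   Context: Variant 1: a single knapsack of capacity $C$; items $n=1,\dots,N$ arrive one at a time; item $n$ has size $D_n>0$ and value function $g_n:[0,D_n]\to\mathbb R_{\ge0}$, revealed on arrival. Any remaining capacity at the end is filled at the lowest marginal value $L$: the offline problem is $\max\sum_n g_n(y_n)+(C-\sum_n y_n)L$ s.t. $\sum_n y_n\le C$, $0\le y_n\le D_n$, and an online algorithm choosing $y_1,\dots,y_N$ earns $\sum_n g_n(y_n)+(C-\sum_n y_n)L$. Assumption A: each $g_n$ is non-decreasing, differentiable, concave, $g_n(0)=0$, $L\le g_n'\le U$, with $C,L,U$ known. An online algorithm irrevocably chooses $y_n$ on arrival using only items $1,\dots,n$ and $C,L,U$; competitive ratio is $\sup_{\mathcal I}\mathrm{OPT}/\mathrm{ALG}$ over instances satisfying Assumption A. $\mathsf{OTA}_\phi$: start with $w^{(1)}=0$; upon arrival of item $n$ choose $y_n^*\in\arg\max_{0\le y\le D_n} g_n(y)-\int_{w^{(n)}}^{w^{(n)}+y}\phi(u)du$ and set $w^{(n+1)}=w^{(n)}+y_n^*$. *)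

theory Defs
  imports "HOL-Analysis.Analysis"
begin

definition assumpA :: "real \<Rightarrow> real \<Rightarrow> real \<Rightarrow> (real \<Rightarrow> real) \<Rightarrow> bool" where
  "assumpA L U D g \<longleftrightarrow> D > 0 \<and> g 0 = 0 \<and> mono_on {0..D} g \<and> concave_on {0..D} g \<and>
     (\<exists>g'. \<forall>x\<in>{0..D}. (g has_real_derivative g' x) (at x within {0..D}) \<and> L \<le> g' x \<and> g' x \<le> U)"

text \<open>The threshold function phi* on [0,C] (it is +infinity beyond C, which is modelled by
  restricting choices to w + y \<le> C in the OTA rule below).\<close>
definition phi_star :: "real \<Rightarrow> real \<Rightarrow> real \<Rightarrow> real \<Rightarrow> real \<Rightarrow> real" where
  "phi_star C L U \<alpha> w = L + (U - L) * exp (\<alpha> / C * w - \<alpha>)"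

text \<open>y is a run of OTA_{phi*} on the instance (N, D, g): for every item n < N, with current
  utilization w = y_0 + ... + y_{n-1}, y_n maximizes g_n(y) - integral of phi* over [w, w+y]
  over 0 \<le> y \<le> D_n (values with w+y > C have pseudo-utility -infinity).\<close>
definition ota_run :: "real \<Rightarrow> real \<Rightarrow> real \<Rightarrow> real \<Rightarrow> nat \<Rightarrow> (nat \<Rightarrow> real) \<Rightarrow>
    (nat \<Rightarrow> real \<Rightarrow> real) \<Rightarrow> (nat \<Rightarrow> real) \<Rightarrow> bool" where
  "ota_run C L U \<alpha> N D g y \<longleftrightarrow>
     (\<forall>n<N. let w = (\<Sum>i<n. y i) in
        0 \<le> y n \<and> y n \<le> D n \<and> w + y n \<le> C \<and>
        (\<forall>z. 0 \<le> z \<and> z \<le> D n \<and> w + z \<le> C \<longrightarrow>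
           g n z - integral {w..w + z} (phi_star C L U \<alpha>)
             \<le> g n (y n) - integral {w..w + y n} (phi_star C L U \<alpha>)))"

definition payoff :: "real \<Rightarrow> real \<Rightarrow> nat \<Rightarrow> (nat \<Rightarrow> real \<Rightarrow> real) \<Rightarrow> (nat \<Rightarrow> real) \<Rightarrow> real" where
  "payoff C L N g y = (\<Sum>n<N. g n (y n)) + (C - (\<Sum>n<N. y n)) * L"

definition feasible :: "real \<Rightarrow> nat \<Rightarrow> (nat \<Rightarrow> real) \<Rightarrow> (nat \<Rightarrow> real) \<Rightarrow> bool" where
  "feasible C N D y \<longleftrightarrow> (\<Sum>n<N. y n) \<le> C \<and> (\<forall>n<N. 0 \<le> y n \<and> y n \<le> D n)"

text \<open>Offline optimum (the maximum is attained; we write it as a supremum).\<close>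
definition OPT :: "real \<Rightarrow> real \<Rightarrow> nat \<Rightarrow> (nat \<Rightarrow> real) \<Rightarrow> (nat \<Rightarrow> real \<Rightarrow> real) \<Rightarrow> real" where
  "OPT C L N D g = Sup {payoff C L N g y | y. feasible C N D y}"

definition cr_ota_star :: "real \<Rightarrow> real \<Rightarrow> real \<Rightarrow> real \<Rightarrow> ereal" where
  "cr_ota_star C L U \<alpha> = Sup {ereal (OPT C L N D g / payoff C L N g y) | N D g y.
       (\<forall>n<N. assumpA L U (D n) (g n)) \<and> ota_run C L U \<alpha> N D g y}"

end

theory Submission
  imports Defs
begin

definition PhiS :: "real \<Rightarrow> real \<Rightarrow> real \<Rightarrow> real \<Rightarrow> real \<Rightarrow> real" where
  "PhiS C L U \<alpha> w = L * w + (U - L) * (C / \<alpha>) * exp (\<alpha> / C * w - \<alpha>)"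

lemma PhiS_deriv:
  assumes "C > 0" "\<alpha> > 0"
  shows "(PhiS C L U \<alpha> has_real_derivative phi_star C L U \<alpha> w) (at w within S)"
proof -
  have "((\<lambda>w. L * w + (U - L) * (C / \<alpha>) * exp (\<alpha> / C * w - \<alpha>)) has_real_derivative
     (L * 1 + (U - L) * (C / \<alpha>) * (exp (\<alpha> / C * w - \<alpha>) * (\<alpha> / C * 1 - 0)))) (at w within S)"
    by (rule derivative_eq_intros refl | simp)+
  moreover have "L * 1 + (U - L) * (C / \<alpha>) * (exp (\<alpha> / C * w - \<alpha>) * (\<alpha> / C * 1 - 0))
      = phi_star C L U \<alpha> w" using assms by (simp add: phi_star_def field_simps)
  ultimately show ?thesis unfolding PhiS_def[abs_def] by simp
qed

lemma integral_phi:
  assumes "C > 0" "\<alpha> > 0" "a \<le> b"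
  shows "integral {a..b} (phi_star C L U \<alpha>) = PhiS C L U \<alpha> b - PhiS C L U \<alpha> a"
  apply (rule integral_unique)
  apply (rule fundamental_theorem_of_calculus[OF assms(3)])
  using PhiS_deriv[OF assms(1,2)] by (simp add: has_real_derivative_iff_has_vector_derivative)

lemma phi_mono:
  assumes "C > 0" "\<alpha> > 0" "L < U" "a \<le> b"
  shows "phi_star C L U \<alpha> a \<le> phi_star C L U \<alpha> b"
proof -
  have "\<alpha> / C * a \<le> \<alpha> / C * b" using assms by (intro mult_left_mono) auto
  then show ?thesis using assms unfolding phi_star_def by (intro add_left_mono mult_left_mono) auto
qed

lemma PhiS_upper:
  assumes "C > 0" "\<alpha> > 0" "L < U" "a \<le> b"
  shows "PhiS C L U \<alpha> b - PhiS C L U \<alpha> a \<le> (b - a) * phi_star C L U \<alpha> b"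
proof -
  define d where "d = \<alpha> / C * (b - a)"
  define B where "B = \<alpha> / C * b - \<alpha>"
  have A: "\<alpha> / C * a - \<alpha> = B + - d" using assms unfolding d_def B_def by (simp add: field_simps)
  have "1 + - d \<le> exp (- d)" by (rule exp_ge_add_one_self)
  hence "exp B * (1 - d) \<le> exp B * exp (- d)" by simp
  have e: "exp (B + - d) = exp B * exp (- d)" by (rule exp_add)
  have "exp B - exp (B + - d) \<le> exp B * d" unfolding e using \<open>exp B * (1 - d) \<le> exp B * exp (- d)\<close> by (simp add: algebra_simps)
  hence "(U - L) * (C / \<alpha>) * (exp B - exp (B + - d)) \<le> (U - L) * (C / \<alpha>) * (exp B * d)"
    using assms by (intro mult_left_mono) auto
  also have "\<dots> = (U - L) * exp B * (b - a)" using assms unfolding d_def by (simp add: field_simps)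
  finally have *: "(U - L) * (C / \<alpha>) * (exp B - exp (B + - d)) \<le> (U - L) * exp B * (b - a)" .
  have "PhiS C L U \<alpha> b - PhiS C L U \<alpha> a = L * (b - a) + (U - L) * (C / \<alpha>) * (exp B - exp (B + - d))"
    unfolding PhiS_def A B_def by (simp add: algebra_simps)
  moreover have "(b - a) * phi_star C L U \<alpha> b = L * (b - a) + (U - L) * exp B * (b - a)"
    unfolding phi_star_def B_def by (simp add: algebra_simps)
  ultimately show ?thesis using * by linarith
qed

lemma PhiS_lower:
  assumes "C > 0" "\<alpha> > 0" "L < U" "a \<le> b"
  shows "(b - a) * phi_star C L U \<alpha> a \<le> PhiS C L U \<alpha> b - PhiS C L U \<alpha> a"
proof -
  define d where "d = \<alpha> / C * (b - a)"
  define A where "A = \<alpha> / C * a - \<alpha>"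
  have B: "\<alpha> / C * b - \<alpha> = A + d" using assms unfolding d_def A_def by (simp add: field_simps)
  have "1 + d \<le> exp d" by (rule exp_ge_add_one_self)
  hence "exp A * (1 + d) \<le> exp A * exp d" by simp
  have "exp A * d \<le> exp (A + d) - exp A" unfolding exp_add using \<open>exp A * (1 + d) \<le> exp A * exp d\<close> by (simp add: algebra_simps)
  hence "(U - L) * (C / \<alpha>) * (exp A * d) \<le> (U - L) * (C / \<alpha>) * (exp (A + d) - exp A)"
    using assms by (intro mult_left_mono) auto
  moreover have "(U - L) * (C / \<alpha>) * (exp A * d) = (U - L) * exp A * (b - a)" using assms unfolding d_def by (simp add: field_simps)
  ultimately have *: "(U - L) * exp A * (b - a) \<le> (U - L) * (C / \<alpha>) * (exp (A + d) - exp A)" by simp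
  have "PhiS C L U \<alpha> b - PhiS C L U \<alpha> a = L * (b - a) + (U - L) * (C / \<alpha>) * (exp (A + d) - exp A)"
    unfolding PhiS_def B A_def by (simp add: algebra_simps)
  moreover have "(b - a) * phi_star C L U \<alpha> a = L * (b - a) + (U - L) * exp A * (b - a)"
    unfolding phi_star_def A_def by (simp add: algebra_simps)
  ultimately show ?thesis using * by linarith
qed


lemma item_key:
  assumes C: "C > 0" and al: "\<alpha> > 0" and LU: "L < U"
    and aA: "assumpA L U D g"
    and y0: "0 \<le> y" and yx: "y < x" and xD: "x \<le> D" and ayw: "a + y \<le> w" and wC: "w \<le> C"
    and opt: "\<forall>z. 0 \<le> z \<and> z \<le> D \<and> a + z \<le> C \<longrightarrow>
       g z - (PhiS C L U \<alpha> (a + z) - PhiS C L U \<alpha> a) \<le> g y - (PhiS C L U \<alpha> (a + y) - PhiS C L U \<alpha> a)"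
    and phiC: "phi_star C L U \<alpha> C = U"
  shows "g x - g y \<le> phi_star C L U \<alpha> w * (x - y)"
proof -
  obtain g' where dg: "\<forall>t\<in>{0..D}. (g has_real_derivative g' t) (at t within {0..D}) \<and> L \<le> g' t \<and> g' t \<le> U"
    using aA unfolding assumpA_def by (elim conjE exE) (rule that, assumption)
  have conc: "concave_on {0..D} g" using aA unfolding assumpA_def by (elim conjE)
  have yD: "y \<in> {0..D}" using y0 yx xD by auto
  have "(g has_real_derivative g' y) (at y within {y..x})"
  proof (rule has_field_derivative_subset[of g "g' y" y "{0..D}"])
    show "(g has_real_derivative g' y) (at y within {0..D})" using dg yD by blast
    show "{y..x} \<subseteq> {0..D}" using y0 xD by auto
  qed
  hence lim: "((\<lambda>t. (g t - g y) / (t - y)) \<longlongrightarrow> g' y) (at_right y)"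
    using has_field_derivative_iff at_within_Icc_at_right[OF yx] by metis
  have q1: "(g x - g y) / (x - y) \<le> g' y"
  proof (rule tendsto_le[OF trivial_limit_at_right_real lim tendsto_const])
    show "\<forall>\<^sub>F t in at_right y. (g x - g y) / (x - y) \<le> (g t - g y) / (t - y)"
      using eventually_at_right_real[OF yx]
    proof (rule eventually_mono)
      fix t assume t: "t \<in> {y<..<x}"
      define th where "th = (t - y) / (x - y)"
      have th0: "0 \<le> th" "th \<le> 1" using t unfolding th_def by auto
      have thx: "th * (x - y) = t - y" proof -
        have "x - y \<noteq> 0" using yx by simp
        thus ?thesis unfolding th_def by simp
      qed
      have "(1 - th) * y + th * x = t" using thx by (simp add: algebra_simps)
      hence tt: "(1 - th) *\<^sub>R y + th *\<^sub>R x = t" by simp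
      have "(1 - th) * g y + th * g x \<le> g ((1 - th) *\<^sub>R y + th *\<^sub>R x)"
        using concave_onD[OF conc th0, of y x] yD xD y0 yx by auto
      hence "(1 - th) * g y + th * g x \<le> g t" by (simp only: tt)
      hence "th * (g x - g y) \<le> g t - g y" by (simp add: algebra_simps)
      hence "(t - y) * ((g x - g y) / (x - y)) \<le> g t - g y" unfolding th_def by simp
      thus "(g x - g y) / (x - y) \<le> (g t - g y) / (t - y)" using t by (simp add: field_simps)
    qed
  qed
  have q2: "g' y \<le> phi_star C L U \<alpha> w"
  proof (cases "a + y < C")
    case False
    hence "w = C" using ayw wC by auto
    thus ?thesis using dg yD phiC by auto
  next
    case True
    have cont: "((\<lambda>t. phi_star C L U \<alpha> (a + t)) \<longlongrightarrow> phi_star C L U \<alpha> (a + y)) (at_right y)"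
      unfolding phi_star_def by (intro tendsto_intros)
    have "y < min x (C - a)" using True yx by auto
    have "g' y \<le> phi_star C L U \<alpha> (a + y)"
    proof (rule tendsto_le[OF trivial_limit_at_right_real cont lim])
      show "\<forall>\<^sub>F t in at_right y. (g t - g y) / (t - y) \<le> phi_star C L U \<alpha> (a + t)"
        using eventually_at_right_real[OF \<open>y < min x (C - a)\<close>]
      proof (rule eventually_mono)
        fix t assume t: "t \<in> {y<..<min x (C - a)}"
        have "g t - (PhiS C L U \<alpha> (a + t) - PhiS C L U \<alpha> a) \<le> g y - (PhiS C L U \<alpha> (a + y) - PhiS C L U \<alpha> a)"
          using opt t y0 xD by auto
        moreover have "PhiS C L U \<alpha> (a + t) - PhiS C L U \<alpha> (a + y) \<le> ((a + t) - (a + y)) * phi_star C L U \<alpha> (a + t)"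
          using PhiS_upper[OF C al LU, of "a + y" "a + t"] t by auto
        ultimately have "g t - g y \<le> (t - y) * phi_star C L U \<alpha> (a + t)" by simp
        thus "(g t - g y) / (t - y) \<le> phi_star C L U \<alpha> (a + t)" using t by (simp add: field_simps)
      qed
    qed
    also have "\<dots> \<le> phi_star C L U \<alpha> w" using phi_mono[OF C al LU ayw] .
    finally show ?thesis .
  qed
  have "g x - g y \<le> g' y * (x - y)" using q1 yx by (simp add: field_simps)
  also have "\<dots> \<le> phi_star C L U \<alpha> w * (x - y)" using q2 yx by (intro mult_right_mono) auto
  finally show ?thesis .
qed


lemma phi_facts:
  assumes C: "C > 0" and L0: "0 < L" and LU: "L < U" and a1: "\<alpha> > 1"
    and aeq: "\<alpha> = ln ((U - L) / (\<alpha> * L - L))"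
  shows "(U - L) * exp (- \<alpha>) = (\<alpha> - 1) * L"
    and "phi_star C L U \<alpha> 0 = \<alpha> * L"
    and "phi_star C L U \<alpha> C = U"
proof -
  have pos: "(U - L) / (\<alpha> * L - L) > 0" using L0 LU a1 by (intro divide_pos_pos) (auto simp: algebra_simps)
  have "exp \<alpha> = (U - L) / (\<alpha> * L - L)" using pos aeq by (metis exp_ln)
  hence "exp (- \<alpha>) = (\<alpha> * L - L) / (U - L)" by (simp add: exp_minus)
  thus e: "(U - L) * exp (- \<alpha>) = (\<alpha> - 1) * L" using LU by (simp add: field_simps)
  show "phi_star C L U \<alpha> 0 = \<alpha> * L" unfolding phi_star_def using e by (simp add: algebra_simps)
  show "phi_star C L U \<alpha> C = U" unfolding phi_star_def using C by simp
qed

lemma key_identity: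
  assumes C: "C > 0" and a1: "\<alpha> > 1" and e: "(U - L) * exp (- \<alpha>) = (\<alpha> - 1) * L"
  shows "phi_star C L U \<alpha> w * C \<le> \<alpha> * (PhiS C L U \<alpha> w - PhiS C L U \<alpha> 0) + \<alpha> * (C - w) * L"
proof -
  define E where "E = exp (\<alpha> / C * w - \<alpha>)"
  have "\<alpha> * (PhiS C L U \<alpha> w - PhiS C L U \<alpha> 0) = \<alpha> * L * w + (U - L) * C * E - C * ((U - L) * exp (- \<alpha>))"
    unfolding PhiS_def E_def using C a1 by (simp add: field_simps)
  also have "\<dots> = \<alpha> * L * w + (U - L) * C * E - C * ((\<alpha> - 1) * L)" using e by simp
  finally have *: "\<alpha> * (PhiS C L U \<alpha> w - PhiS C L U \<alpha> 0) = \<alpha> * L * w + (U - L) * C * E - C * ((\<alpha> - 1) * L)" .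
  have "phi_star C L U \<alpha> w * C = L * C + (U - L) * C * E" unfolding phi_star_def E_def by (simp add: algebra_simps)
  thus ?thesis using * by (simp add: algebra_simps)
qed

lemma main_bound:
  assumes C: "C > 0" and L0: "0 < L" and LU: "L < U" and a1: "\<alpha> > 1"
    and aeq: "\<alpha> = ln ((U - L) / (\<alpha> * L - L))"
    and aA: "\<forall>n<N. assumpA L U (D n) (g n)"
    and run: "ota_run C L U \<alpha> N D g y"
    and fx: "feasible C N D x"
  shows "payoff C L N g x \<le> \<alpha> * payoff C L N g y \<and> C * L \<le> payoff C L N g y"
proof -
  have al: "\<alpha> > 0" using a1 by simp
  note pf = phi_facts[OF C L0 LU a1 aeq]
  define Ph where "Ph = PhiS C L U \<alpha>"
  define ph where "ph = phi_star C L U \<alpha>"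
  define W where "W n = (\<Sum>i<n. y i)" for n
  define w where "w = W N"
  have yb: "0 \<le> y n" "y n \<le> D n" "W n + y n \<le> C" if "n < N" for n
    using run that unfolding ota_run_def W_def Let_def by auto
  have WS: "W (Suc n) = W n + y n" for n unfolding W_def by simp
  have W0: "W 0 = 0" unfolding W_def by simp
  have Wnn: "0 \<le> W n" if "n \<le> N" for n
    unfolding W_def using that yb(1) by (intro sum_nonneg) auto
  have Wle: "W n \<le> w" if "n \<le> N" for n
    unfolding w_def W_def using that yb(1) by (intro sum_mono2) auto
  have wC: "w \<le> C"
  proof (cases N)
    case 0 thus ?thesis using C unfolding w_def W_def by simp
  next
    case (Suc m) thus ?thesis using yb(3)[of m] WS[of m] unfolding w_def by simp
  qed
  have w0: "0 \<le> w" unfolding w_def using Wnn by simp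
  have opt: "g n z - (Ph (W n + z) - Ph (W n)) \<le> g n (y n) - (Ph (W n + y n) - Ph (W n))"
    if "n < N" "0 \<le> z" "z \<le> D n" "W n + z \<le> C" for n z
  proof -
    have "g n z - integral {W n..W n + z} ph \<le> g n (y n) - integral {W n..W n + y n} ph"
      using run that unfolding ota_run_def W_def Let_def ph_def by auto
    thus ?thesis using integral_phi[OF C al, of "W n" "W n + z" L U] integral_phi[OF C al, of "W n" "W n + y n" L U]
      yb[OF that(1)] that unfolding Ph_def ph_def by simp
  qed
  have g0: "g n 0 = 0" if "n < N" for n using aA that unfolding assumpA_def by auto
  have Dpos: "0 < D n" if "n < N" for n using aA that unfolding assumpA_def by auto
  have sa: "Ph (W (Suc n)) - Ph (W n) \<le> g n (y n)" if "n < N" for n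
    using opt[OF that, of 0] g0[OF that] Dpos[OF that] yb[OF that] Wnn[of n] that unfolding WS by simp
  have sb: "g n (x n) - ph w * x n \<le> g n (y n) - (Ph (W (Suc n)) - Ph (W n))" if "n < N" for n
  proof (cases "x n \<le> y n")
    case True
    have x0: "0 \<le> x n" "x n \<le> D n" using fx that unfolding feasible_def by auto
    have "g n (x n) - (Ph (W n + x n) - Ph (W n)) \<le> g n (y n) - (Ph (W n + y n) - Ph (W n))"
      using opt[OF that x0] yb[OF that] True by simp
    moreover have "Ph (W n + x n) - Ph (W n) \<le> (W n + x n - W n) * ph (W n + x n)"
      unfolding Ph_def ph_def using x0 by (intro PhiS_upper[OF C al LU]) simp
    moreover have "ph (W n + x n) \<le> ph w"
      unfolding ph_def using Wle[of "Suc n"] that True WS[of n] by (intro phi_mono[OF C al LU]) simp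
    moreover have "x n * ph (W n + x n) \<le> x n * ph w" using calculation(3) x0 by (intro mult_left_mono)
    ultimately show ?thesis unfolding WS by (simp add: algebra_simps)
  next
    case False
    have x0: "0 \<le> x n" "x n \<le> D n" using fx that unfolding feasible_def by auto
    have "g n (x n) - g n (y n) \<le> phi_star C L U \<alpha> w * (x n - y n)"
    proof (rule item_key[OF C al LU aA[rule_format, OF that] yb(1)[OF that]])
      show "y n < x n" using False by simp
      show "x n \<le> D n" by fact
      show "W n + y n \<le> w" using Wle[of "Suc n"] that WS[of n] by simp
      show "w \<le> C" by fact
      show "phi_star C L U \<alpha> C = U" using pf(3) .
      show "\<forall>z. 0 \<le> z \<and> z \<le> D n \<and> W n + z \<le> C \<longrightarrow>
       g n z - (PhiS C L U \<alpha> (W n + z) - PhiS C L U \<alpha> (W n)) \<le> g n (y n) - (PhiS C L U \<alpha> (W n + y n) - PhiS C L U \<alpha> (W n))"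
        using opt[OF that] unfolding Ph_def by blast
    qed
    moreover have "Ph (W n + y n) - Ph (W n) \<le> (W n + y n - W n) * ph (W n + y n)"
      unfolding Ph_def ph_def using yb[OF that] by (intro PhiS_upper[OF C al LU]) simp
    moreover have "ph (W n + y n) \<le> ph w"
      unfolding ph_def using Wle[of "Suc n"] that WS[of n] by (intro phi_mono[OF C al LU]) simp
    moreover have "y n * ph (W n + y n) \<le> y n * ph w" using calculation(3) yb[OF that] by (intro mult_left_mono) auto
    ultimately show ?thesis unfolding WS ph_def by (simp add: algebra_simps)
  qed
  have tel: "(\<Sum>n<N. Ph (W (Suc n)) - Ph (W n)) = Ph w - Ph 0"
    using sum_lessThan_telescope[of "\<lambda>n. Ph (W n)" N] W0 unfolding w_def by simp
  have SA: "Ph w - Ph 0 \<le> (\<Sum>n<N. g n (y n))"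
    unfolding tel[symmetric] using sa by (intro sum_mono) auto
  have SB: "(\<Sum>n<N. g n (x n) - ph w * x n) \<le> (\<Sum>n<N. g n (y n) - (Ph (W (Suc n)) - Ph (W n)))"
    using sb by (intro sum_mono) auto
  have e1: "(\<Sum>n<N. g n (x n) - ph w * x n) = (\<Sum>n<N. g n (x n)) - ph w * (\<Sum>n<N. x n)"
    by (simp add: sum_subtractf sum_distrib_left)
  have e2: "(\<Sum>n<N. g n (y n) - (Ph (W (Suc n)) - Ph (W n))) = (\<Sum>n<N. g n (y n)) - (Ph w - Ph 0)"
    by (simp only: sum_subtractf[of "\<lambda>n. g n (y n)"] tel)
  have SB': "(\<Sum>n<N. g n (x n)) - ph w * (\<Sum>n<N. x n) \<le> (\<Sum>n<N. g n (y n)) - (Ph w - Ph 0)"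
    using SB unfolding e1 e2 .
  have sx: "(\<Sum>n<N. x n) \<le> C" using fx unfolding feasible_def by simp
  have phL: "L \<le> ph w" using phi_mono[OF C al LU w0] pf(2) a1 L0 unfolding ph_def
    by (smt (verit) mult_le_cancel_right1)
  have "(ph w - L) * (C - (\<Sum>n<N. x n)) \<ge> 0" using phL sx by simp
  hence c1: "ph w * (\<Sum>n<N. x n) + (C - (\<Sum>n<N. x n)) * L \<le> ph w * C" by (simp add: algebra_simps)
  have key: "ph w * C \<le> \<alpha> * (Ph w - Ph 0) + \<alpha> * (C - w) * L"
    unfolding ph_def Ph_def by (rule key_identity[OF C a1 pf(1)])
  have c2: "(\<alpha> - 1) * (Ph w - Ph 0) \<le> (\<alpha> - 1) * (\<Sum>n<N. g n (y n))" using SA a1 by (intro mult_left_mono) auto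
  have payx: "payoff C L N g x = (\<Sum>n<N. g n (x n)) + (C - (\<Sum>n<N. x n)) * L" unfolding payoff_def ..
  have payy: "\<alpha> * payoff C L N g y = \<alpha> * (\<Sum>n<N. g n (y n)) + \<alpha> * (C - w) * L"
    unfolding payoff_def w_def W_def by (simp add: algebra_simps)
  have P1: "payoff C L N g x \<le> \<alpha> * payoff C L N g y"
    unfolding payx payy using SB' c1 key c2 by (simp add: algebra_simps)
  have "w * ph 0 \<le> Ph w - Ph 0" unfolding Ph_def ph_def using PhiS_lower[OF C al LU w0] by simp
  moreover have "w * L \<le> w * ph 0" unfolding ph_def pf(2) using w0 a1 L0 by (intro mult_left_mono) auto
  ultimately have "C * L \<le> (\<Sum>n<N. g n (y n)) + (C - w) * L" using SA by (simp add: algebra_simps)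
  hence P2: "C * L \<le> payoff C L N g y" unfolding payoff_def w_def W_def .
  show ?thesis using P1 P2 by blast
qed


theorem corollary1:
  fixes C L U \<alpha> :: real
  assumes "C > 0" and "0 < L" and "L < U"
    and "\<alpha> > 1" and "\<alpha> = ln ((U - L) / (\<alpha> * L - L))"
  shows "cr_ota_star C L U \<alpha> = ereal \<alpha>"
proof -
  note C = assms(1) and L0 = assms(2) and LU = assms(3) and a1 = assms(4) and aeq = assms(5)
  have al: "\<alpha> > 0" using a1 by simp
  note pf = phi_facts[OF C L0 LU a1 aeq]
  have ratio_le: "OPT C L N D g / payoff C L N g y \<le> \<alpha>"
    if aA: "\<forall>n<N. assumpA L U (D n) (g n)" and run: "ota_run C L U \<alpha> N D g y" for N D g y
  proof -
    have mb: "payoff C L N g x \<le> \<alpha> * payoff C L N g y \<and> C * L \<le> payoff C L N g y"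
      if "feasible C N D x" for x using main_bound[OF C L0 LU a1 aeq aA run that] .
    have f0: "feasible C N D (\<lambda>_. 0)" using aA C unfolding feasible_def assumpA_def by auto
    have "OPT C L N D g \<le> \<alpha> * payoff C L N g y"
      unfolding OPT_def using mb f0 by (intro cSup_least) auto
    moreover have "0 < payoff C L N g y" using mb[OF f0] C L0 by (smt (verit) mult_pos_pos)
    ultimately show ?thesis by (simp add: divide_le_eq)
  qed
  define D1 where "D1 = (\<lambda>_::nat. C)"
  define g1 where "g1 = (\<lambda>(_::nat) (z::real). \<alpha> * L * z)"
  define y1 where "y1 = (\<lambda>_::nat. (0::real))"
  have aLU: "L \<le> \<alpha> * L" "\<alpha> * L \<le> U"
    using a1 L0 apply simp
    using phi_mono[OF C al LU, of 0 C] pf C by simp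
  have aA1: "\<forall>n<1. assumpA L U (D1 n) (g1 n)"
  proof (intro allI impI)
    fix n :: nat
    have "(\<forall>x\<in>{0..C}. ((\<lambda>z. \<alpha> * L * z) has_real_derivative (\<alpha> * L)) (at x within {0..C}) \<and> L \<le> \<alpha> * L \<and> \<alpha> * L \<le> U)"
      using aLU by (auto intro!: derivative_eq_intros)
    moreover have "mono_on {0..C} (\<lambda>z. \<alpha> * L * z)" using a1 L0 by (intro mono_onI) (simp add: mult_left_mono)
    moreover have "concave_on {0..C} (\<lambda>z. \<alpha> * L * z)" unfolding concave_on_iff by (simp add: algebra_simps)
    ultimately show "assumpA L U (D1 n) (g1 n)" unfolding assumpA_def D1_def g1_def using C
      by (intro conjI exI[of _ "\<lambda>_. \<alpha> * L"]) simp_all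
  qed
  have run1: "ota_run C L U \<alpha> 1 D1 g1 y1"
    unfolding ota_run_def
  proof (intro allI impI)
    fix n :: nat assume "n < 1"
    hence n0: "n = 0" by simp
    have "\<alpha> * L * z - integral {0..0 + z} (phi_star C L U \<alpha>) \<le> 0 - integral {0..0 + 0} (phi_star C L U \<alpha>)"
      if "0 \<le> z" for z
    proof -
      have "z * phi_star C L U \<alpha> 0 \<le> PhiS C L U \<alpha> z - PhiS C L U \<alpha> 0" using PhiS_lower[OF C al LU that] by simp
      thus ?thesis using integral_phi[OF C al that, of L U] integral_phi[OF C al, of 0 0 L U] pf(2) by (simp add: algebra_simps)
    qed
    thus "let w = \<Sum>i<n. y1 i in
         0 \<le> y1 n \<and> y1 n \<le> D1 n \<and> w + y1 n \<le> C \<and>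
         (\<forall>z. 0 \<le> z \<and> z \<le> D1 n \<and> w + z \<le> C \<longrightarrow>
              g1 n z - integral {w..w + z} (phi_star C L U \<alpha>)
              \<le> g1 n (y1 n) - integral {w..w + y1 n} (phi_star C L U \<alpha>))"
      unfolding n0 y1_def D1_def g1_def Let_def using C by simp
  qed
  have pay1: "payoff C L 1 g1 y1 = C * L" unfolding payoff_def g1_def y1_def by simp
  have mb1: "payoff C L 1 g1 x \<le> \<alpha> * (C * L)" if "feasible C 1 D1 x" for x
    using main_bound[OF C L0 LU a1 aeq aA1 run1 that] pay1 by simp
  have fC: "feasible C 1 D1 (\<lambda>_. C)" unfolding feasible_def D1_def using C by simp
  have payC: "payoff C L 1 g1 (\<lambda>_. C) = \<alpha> * (C * L)" unfolding payoff_def g1_def by simp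
  have bdd: "bdd_above {payoff C L 1 g1 x | x. feasible C 1 D1 x}"
    using mb1 by (intro bdd_aboveI[of _ "\<alpha> * (C * L)"]) auto
  have "\<alpha> * (C * L) \<le> OPT C L 1 D1 g1"
    unfolding OPT_def using fC payC by (intro cSup_upper[OF _ bdd]) (auto intro!: exI[of _ "\<lambda>_. C"])
  moreover have "OPT C L 1 D1 g1 \<le> \<alpha> * (C * L)"
    unfolding OPT_def using mb1 fC by (intro cSup_least) auto
  ultimately have opt1: "OPT C L 1 D1 g1 = \<alpha> * (C * L)" by simp
  have r1: "OPT C L 1 D1 g1 / payoff C L 1 g1 y1 = \<alpha>" unfolding opt1 pay1 using C L0 by simp
  show ?thesis
    unfolding cr_ota_star_def
  proof (rule antisym)
    show "Sup {ereal (OPT C L N D g / payoff C L N g y) | N D g y.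
       (\<forall>n<N. assumpA L U (D n) (g n)) \<and> ota_run C L U \<alpha> N D g y} \<le> ereal \<alpha>"
      using ratio_le by (intro Sup_least) auto
    show "ereal \<alpha> \<le> Sup {ereal (OPT C L N D g / payoff C L N g y) | N D g y.
       (\<forall>n<N. assumpA L U (D n) (g n)) \<and> ota_run C L U \<alpha> N D g y}"
      using aA1 run1 r1 by (intro Sup_upper) force
  qed
qed

end
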